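(* For $a,b\in\mathbb{Z}$, writing $\Sigma_{(c,d)}$ for the set of finite sums $\sum f_{(a',b')}E_{(a',b')}$ over $(a',b')\preceq(c,d)$ with all $f_{(a',b')}\in q^{-\frac12}\mathbb{Z}[q^{-\frac12}]$, we have: (1) $q^{\frac12a}E_{(a,b)}X_0-E_{(a,b-1)}\in\Sigma_{(a+1,b-1)}$; (2) $q^{\frac12b}X_3E_{(a,b)}-E_{(a-1,b)}\in\Sigma_{(a-1,b+4)}$; (3) $q^{\frac12b}E_{(a,b)}X_1-E_{(a+1,b)}\in\Sigma_{(a+1,b+4)}$; (4) if $b>0$, $q^{-\frac12a}X_4E_{(a,b)}-E_{(a,b-1)}\in\Sigma_{(a-1,b-1)}$; (5) if $a>0$ and $b\le0$, $q^{-\frac12(a-b)}X_4E_{(a,b)}-E_{(a-1,b-1)}\in\Sigma_{(a-1,b+3)}$; (6) if $a\le0$ and $b\le0$, $q^{-\frac12(a-b)}X_4E_{(a,b)}-E_{(a-1,b-1)}\in\Sigma_{(a,b)}$.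
   Context: Let $\mathcal{T}$ be the quantum torus over $\mathbb{Z}[q^{\pm\frac12}]$ generated by $X_1^{\pm1},X_2^{\pm1}$ with $X_1X_2=qX_2X_1$, with skew field of fractions $\mathcal{F}$. Define $X_k\in\mathcal{F}$ ($k\in\mathbb{Z}$) by $X_{k-1}X_{k+1}=q^{\frac12}X_k+1$ for $k$ odd and $X_{k-1}X_{k+1}=q^2X_k^4+1$ for $k$ even; $\mathcal{A}_q(1,4)$ is the $\mathbb{Z}[q^{\pm\frac12}]$-subalgebra of $\mathcal{F}$ generated by all $X_k$. For $x\in\mathbb{Z}$, $[x]_+=\max(x,0)$. Standard monomials: $E_{(a,b)}=q^{-\frac12ab}X_3^{[-a]_+}X_1^{[a]_+}X_2^{[b]_+}X_0^{[-b]_+}$ for $(a,b)\in\mathbb{Z}^2$. Partial order on $\mathbb{Z}^2$: $(a',b')\preceq(a,b)$ iff $[-a']_+\le[-a]_+$ and $[-b']_+\le[-b]_+$. *)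

theory Defs
  imports "HOL-Library.Poly_Mapping"
begin

text \<open>Quantum torus T over Z[v,v^-1], v = q^(1/2), generated by X1, X2 with
  X1 X2 = q X2 X1 = v^2 X2 X1.  An element is a finitely supported map
  (n,a,b) to its integer coefficient at the normally ordered monomial
  v^n X1^a X2^b.  Since X2^b X1^c = v^(-2bc) X1^c X2^b, one has
  (v^n X1^a X2^b)(v^m X1^c X2^d) = v^(n+m-2bc) X1^(a+c) X2^(b+d).\<close>

type_synonym qt = "(int \<times> int \<times> int) \<Rightarrow>\<^sub>0 int"

definition mulkey :: "int \<times> int \<times> int \<Rightarrow> int \<times> int \<times> int \<Rightarrow> int \<times> int \<times> int" where
  "mulkey k l = (case k of (n, a, b) \<Rightarrow> case l of (m, c, d) \<Rightarrow>
      (n + m - 2 * b * c, a + c, b + d))"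

text \<open>Noncommutative multiplication of the quantum torus (NOT the poly_mapping times).\<close>
definition qmul :: "qt \<Rightarrow> qt \<Rightarrow> qt" where
  "qmul p r = (\<Sum>k\<in>Poly_Mapping.keys p. \<Sum>l\<in>Poly_Mapping.keys r. Poly_Mapping.single (mulkey k l) (Poly_Mapping.lookup p k * Poly_Mapping.lookup r l))"

definition mon :: "int \<Rightarrow> int \<Rightarrow> int \<Rightarrow> qt" where
  "mon n a b = Poly_Mapping.single (n, a, b) 1"

definition qone :: qt where "qone = mon 0 0 0"

fun qpow :: "qt \<Rightarrow> nat \<Rightarrow> qt" where
  "qpow x 0 = qone"
| "qpow x (Suc k) = qmul x (qpow x k)"

definition X1 :: qt where "X1 = mon 0 1 0"
definition X2 :: qt where "X2 = mon 0 0 1"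

text \<open>Cluster variables via the exchange relations X_{k-1} X_{k+1} = ...
  (k = 1: q^(1/2) X1 + 1; k = 2: q^2 X2^4 + 1; k = 3: q^(1/2) X3 + 1).
  They lie in T, where the relevant left/right factors are invertible, so they are
  uniquely determined inside T.\<close>
definition X0 :: qt where "X0 = (THE x. qmul x X2 = qmul (mon 1 0 0) X1 + qone)"
definition X3 :: qt where "X3 = (THE x. qmul X1 x = qmul (mon 4 0 0) (qpow X2 4) + qone)"
definition X4 :: qt where "X4 = (THE x. qmul X2 x = qmul (mon 1 0 0) X3 + qone)"

definition pos :: "int \<Rightarrow> nat" where "pos x = nat (max x 0)"

definition E :: "int \<times> int \<Rightarrow> qt" where
  "E p = (case p of (a, b) \<Rightarrow>
     qmul (mon (- a * b) 0 0)
       (qmul (qpow X3 (pos (- a)))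
         (qmul (qpow X1 (pos a)) (qmul (qpow X2 (pos b)) (qpow X0 (pos (- b)))))))"

definition prec :: "int \<times> int \<Rightarrow> int \<times> int \<Rightarrow> bool" where
  "prec p p' = (case p of (a', b') \<Rightarrow> case p' of (a, b) \<Rightarrow>
      pos (- a') \<le> pos (- a) \<and> pos (- b') \<le> pos (- b))"

text \<open>Coefficient set q^(-1/2) Z[q^(-1/2)], as scalars in T.\<close>
definition negcoef :: "qt set" where
  "negcoef = {f. Poly_Mapping.keys f \<subseteq> {(n, 0, 0) | n. n < 0}}"

definition Sigma :: "int \<times> int \<Rightarrow> qt set" where
  "Sigma cd = {x. \<exists>S f. finite S \<and> (\<forall>p\<in>S. prec p cd \<and> f p \<in> negcoef)
                     \<and> x = (\<Sum>p\<in>S. qmul (f p) (E p))}"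

end

theory Submission
  imports Defs
begin

lemma qmul_expand:
  assumes "finite K" "Poly_Mapping.keys p \<subseteq> K" "finite L" "Poly_Mapping.keys r \<subseteq> L"
  shows "qmul p r = (\<Sum>k\<in>K. \<Sum>l\<in>L. Poly_Mapping.single (mulkey k l) (Poly_Mapping.lookup p k * Poly_Mapping.lookup r l))"
proof -
  have "qmul p r = (\<Sum>k\<in>Poly_Mapping.keys p. \<Sum>l\<in>L. Poly_Mapping.single (mulkey k l) (Poly_Mapping.lookup p k * Poly_Mapping.lookup r l))"
    unfolding qmul_def
    apply (rule sum.cong[OF refl])
    apply (rule sum.mono_neutral_left)
    using assms by (auto simp: in_keys_iff)
  also have "\<dots> = (\<Sum>k\<in>K. \<Sum>l\<in>L. Poly_Mapping.single (mulkey k l) (Poly_Mapping.lookup p k * Poly_Mapping.lookup r l))"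
    apply (rule sum.mono_neutral_left)
    using assms by (auto simp: in_keys_iff)
  finally show ?thesis .
qed

lemma qmul_add_left: "qmul (p + p') r = qmul p r + qmul p' r"
proof -
  let ?K = "Poly_Mapping.keys p \<union> Poly_Mapping.keys p'" and ?L = "Poly_Mapping.keys r"
  have k: "Poly_Mapping.keys (p + p') \<subseteq> ?K" by (rule keys_add)
  show ?thesis
    apply (subst qmul_expand[of ?K _ ?L]) using k apply auto[4]
    apply (subst qmul_expand[of ?K _ ?L]) apply auto[4]
    apply (subst qmul_expand[of ?K _ ?L]) apply auto[4]
    by (simp add: lookup_add distrib_right single_add sum.distrib)
qed

lemma qmul_add_right: "qmul r (p + p') = qmul r p + qmul r p'"
proof -
  let ?K = "Poly_Mapping.keys p \<union> Poly_Mapping.keys p'" and ?L = "Poly_Mapping.keys r"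
  have k: "Poly_Mapping.keys (p + p') \<subseteq> ?K" by (rule keys_add)
  show ?thesis
    apply (subst qmul_expand[of ?L _ ?K]) using k apply auto[4]
    apply (subst qmul_expand[of ?L _ ?K]) apply auto[4]
    apply (subst qmul_expand[of ?L _ ?K]) apply auto[4]
    by (simp add: lookup_add distrib_left single_add sum.distrib)
qed

lemma qmul_zero_left[simp]: "qmul 0 r = 0" by (simp add: qmul_def)
lemma qmul_zero_right[simp]: "qmul r 0 = 0" by (simp add: qmul_def)

lemma qmul_single: "qmul (Poly_Mapping.single k x) (Poly_Mapping.single l y) = Poly_Mapping.single (mulkey k l) (x * y)"
  by (subst qmul_expand[of "{k}" _ "{l}"]) auto

lemma qmul_sum_left: "finite S \<Longrightarrow> qmul (sum f S) r = (\<Sum>s\<in>S. qmul (f s) r)"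
  by (induction S rule: finite_induct) (auto simp: qmul_add_left)
lemma qmul_sum_right: "finite S \<Longrightarrow> qmul r (sum f S) = (\<Sum>s\<in>S. qmul r (f s))"
  by (induction S rule: finite_induct) (auto simp: qmul_add_right)

lemma pm_sum_singles: "p = (\<Sum>k\<in>Poly_Mapping.keys p. Poly_Mapping.single k (Poly_Mapping.lookup p k))"
  by (rule poly_mapping_eqI) (simp add: lookup_sum lookup_single when_def in_keys_iff)

lemma mulkey_assoc: "mulkey (mulkey k l) m = mulkey k (mulkey l m)"
  by (cases k; cases l; cases m) (simp add: mulkey_def algebra_simps)

lemma sum3_rev: "(\<Sum>a\<in>A. \<Sum>b\<in>B. \<Sum>c\<in>C. (f a b c :: 'z::comm_monoid_add)) = (\<Sum>c\<in>C. \<Sum>b\<in>B. \<Sum>a\<in>A. f a b c)"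
proof -
  have "(\<Sum>a\<in>A. \<Sum>b\<in>B. \<Sum>c\<in>C. f a b c) = (\<Sum>a\<in>A. \<Sum>c\<in>C. \<Sum>b\<in>B. f a b c)"
    by (rule sum.cong[OF refl], rule sum.swap)
  also have "\<dots> = (\<Sum>c\<in>C. \<Sum>a\<in>A. \<Sum>b\<in>B. f a b c)" by (rule sum.swap)
  also have "\<dots> = (\<Sum>c\<in>C. \<Sum>b\<in>B. \<Sum>a\<in>A. f a b c)"
    by (rule sum.cong[OF refl], rule sum.swap)
  finally show ?thesis .
qed

lemma qmul_assoc: "qmul (qmul p r) s = qmul p (qmul r s)"
proof -
  have "qmul (qmul p r) s = qmul (qmul (\<Sum>k\<in>Poly_Mapping.keys p. Poly_Mapping.single k (Poly_Mapping.lookup p k))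
     (\<Sum>k\<in>Poly_Mapping.keys r. Poly_Mapping.single k (Poly_Mapping.lookup r k)))
     (\<Sum>k\<in>Poly_Mapping.keys s. Poly_Mapping.single k (Poly_Mapping.lookup s k))"
    by (simp flip: pm_sum_singles)
  also have "\<dots> = (\<Sum>m\<in>Poly_Mapping.keys s. \<Sum>l\<in>Poly_Mapping.keys r. \<Sum>k\<in>Poly_Mapping.keys p.
      Poly_Mapping.single (mulkey (mulkey k l) m) (Poly_Mapping.lookup p k * Poly_Mapping.lookup r l * Poly_Mapping.lookup s m))"
    by (simp add: qmul_sum_left qmul_sum_right qmul_single)
  also have "\<dots> = (\<Sum>k\<in>Poly_Mapping.keys p. \<Sum>l\<in>Poly_Mapping.keys r. \<Sum>m\<in>Poly_Mapping.keys s.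
      Poly_Mapping.single (mulkey k (mulkey l m)) (Poly_Mapping.lookup p k * (Poly_Mapping.lookup r l * Poly_Mapping.lookup s m)))"
    by (subst sum3_rev) (simp add: mulkey_assoc mult.assoc)
  also have "\<dots> = qmul (\<Sum>k\<in>Poly_Mapping.keys p. Poly_Mapping.single k (Poly_Mapping.lookup p k))
     (qmul (\<Sum>k\<in>Poly_Mapping.keys r. Poly_Mapping.single k (Poly_Mapping.lookup r k))
     (\<Sum>k\<in>Poly_Mapping.keys s. Poly_Mapping.single k (Poly_Mapping.lookup s k)))"
    by (simp add: qmul_sum_left qmul_sum_right qmul_single) (rule sum3_rev)
  finally show ?thesis by (simp flip: pm_sum_singles)
qed


lemma mulkey0: "mulkey (0,0,0) l = l" "mulkey l (0,0,0) = l"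
  by (cases l; simp add: mulkey_def)+

lemma qmul_one_left: "qmul qone p = p"
proof -
  have "qmul qone p = qmul qone (\<Sum>k\<in>Poly_Mapping.keys p. Poly_Mapping.single k (Poly_Mapping.lookup p k))"
    by (simp flip: pm_sum_singles)
  also have "\<dots> = (\<Sum>k\<in>Poly_Mapping.keys p. Poly_Mapping.single k (Poly_Mapping.lookup p k))"
    unfolding qmul_sum_right[OF finite_keys] qone_def mon_def qmul_single mulkey0 by simp
  also have "\<dots> = p" by (rule pm_sum_singles[symmetric])
  finally show ?thesis .
qed

lemma qmul_one_right: "qmul p qone = p"
proof -
  have "qmul p qone = qmul (\<Sum>k\<in>Poly_Mapping.keys p. Poly_Mapping.single k (Poly_Mapping.lookup p k)) qone"
    by (simp flip: pm_sum_singles)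
  also have "\<dots> = (\<Sum>k\<in>Poly_Mapping.keys p. Poly_Mapping.single k (Poly_Mapping.lookup p k))"
    unfolding qmul_sum_left[OF finite_keys] qone_def mon_def qmul_single mulkey0 by simp
  also have "\<dots> = p" by (rule pm_sum_singles[symmetric])
  finally show ?thesis .
qed

lemma qmul_uminus_left: "qmul (- p) r = - qmul p r"
  using qmul_add_left[of p "-p" r] by (simp add: eq_neg_iff_add_eq_0 add.commute)
lemma qmul_uminus_right: "qmul r (- p) = - qmul r p"
  using qmul_add_right[of r p "-p"] by (simp add: eq_neg_iff_add_eq_0 add.commute)

lemma qone_nz: "qone \<noteq> 0"
proof
  assume "qone = 0"
  then have "Poly_Mapping.lookup qone (0,0,0) = Poly_Mapping.lookup 0 (0,0,0)" by simp
  then show False by (simp add: qone_def mon_def)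
qed

typedef qa = "UNIV :: qt set" by auto

instantiation qa :: ring_1
begin
definition "0 = Abs_qa 0"
definition "1 = Abs_qa qone"
definition "x + y = Abs_qa (Rep_qa x + Rep_qa y)"
definition "x - y = Abs_qa (Rep_qa x - Rep_qa y)"
definition "- x = Abs_qa (- Rep_qa x)"
definition "x * y = Abs_qa (qmul (Rep_qa x) (Rep_qa y))"
instance
  by standard (simp_all add: zero_qa_def one_qa_def plus_qa_def minus_qa_def uminus_qa_def times_qa_def
      Abs_qa_inverse Rep_qa_inject[symmetric] algebra_simps qmul_assoc qmul_add_left qmul_add_right
      qmul_one_left qmul_one_right qone_nz)
end

lemma Rep_times: "Rep_qa (x * y) = qmul (Rep_qa x) (Rep_qa y)"
  by (simp add: times_qa_def Abs_qa_inverse)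
lemma Rep_plus: "Rep_qa (x + y) = Rep_qa x + Rep_qa y"
  by (simp add: plus_qa_def Abs_qa_inverse)
lemma Rep_minus: "Rep_qa (x - y) = Rep_qa x - Rep_qa y"
  by (simp add: minus_qa_def Abs_qa_inverse)
lemma Rep_zero: "Rep_qa 0 = 0"
  by (simp add: zero_qa_def Abs_qa_inverse)
lemma Rep_one: "Rep_qa 1 = qone"
  by (simp add: one_qa_def Abs_qa_inverse)
lemma Rep_sum: "Rep_qa (sum f S) = (\<Sum>s\<in>S. Rep_qa (f s))"
  by (induction S rule: infinite_finite_induct) (auto simp: Rep_zero Rep_plus)
lemma Rep_pow: "Rep_qa (x ^ n) = qpow (Rep_qa x) n"
  by (induction n) (auto simp: Rep_one Rep_times)
lemma Abs_times: "Abs_qa (qmul p r) = Abs_qa p * Abs_qa r"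
  by (simp add: times_qa_def Abs_qa_inverse)

definition M :: "int \<Rightarrow> int \<Rightarrow> int \<Rightarrow> qa" where "M n a b = Abs_qa (mon n a b)"

lemma M_mult: "M n a b * M m c d = M (n + m - 2 * b * c) (a + c) (b + d)"
  by (simp add: M_def times_qa_def Abs_qa_inverse mon_def qmul_single mulkey_def)

lemma M000[simp]: "M 0 0 0 = 1"
  by (simp add: M_def one_qa_def qone_def)

definition v :: "int \<Rightarrow> qa" where "v k = M k 0 0"
definition x1 :: qa where "x1 = M 0 1 0"
definition x2 :: qa where "x2 = M 0 0 1"
definition x0 :: qa where "x0 = M 1 1 (-1) + M 0 0 (-1)"
definition x3 :: qa where "x3 = M 4 (-1) 4 + M 0 (-1) 0"
definition x4 :: qa where "x4 = M 3 (-1) 3 + M (-1) (-1) (-1) + M 0 0 (-1)"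

lemmas Msimps = M_mult distrib_left distrib_right v_def x1_def x2_def x0_def x3_def x4_def

lemma X0_eq: "X0 = Rep_qa x0"
proof -
  have "Abs_qa (qmul (mon 1 0 0) X1 + qone) = v 1 * x1 + 1"
    by (simp add: Rep_times plus_qa_def Abs_qa_inverse one_qa_def v_def x1_def X1_def M_def)
  also have "\<dots> = x0 * x2" by (simp add: Msimps)
  finally have e: "Abs_qa (qmul (mon 1 0 0) X1 + qone) = x0 * x2" .
  show ?thesis unfolding X0_def
  proof (rule the_equality)
    show "qmul (Rep_qa x0) X2 = qmul (mon 1 0 0) X1 + qone"
      using e by (metis Abs_qa_inverse Rep_times UNIV_I X2_def M_def x2_def)
  next
    fix y assume "qmul y X2 = qmul (mon 1 0 0) X1 + qone"
    then have "Abs_qa y * x2 = x0 * x2" using e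
      by (simp add: Abs_times[symmetric] x2_def M_def X2_def)
    then have "Abs_qa y * x2 * M 0 0 (-1) = x0 * x2 * M 0 0 (-1)" by simp
    then have "Abs_qa y = x0" by (simp add: mult.assoc x2_def M_mult)
    then show "y = Rep_qa x0" by (metis Abs_qa_inverse UNIV_I)
  qed
qed

lemma X3_eq: "X3 = Rep_qa x3"
proof -
  have "Abs_qa (qmul (mon 4 0 0) (qpow X2 4) + qone) = v 4 * x2^4 + 1"
    by (simp add: Rep_times plus_qa_def Abs_qa_inverse one_qa_def v_def x2_def X2_def M_def
        Rep_pow)
  also have "\<dots> = x1 * x3" by (simp add: Msimps power4_eq_xxxx)
  finally have e: "Abs_qa (qmul (mon 4 0 0) (qpow X2 4) + qone) = x1 * x3" .
  show ?thesis unfolding X3_def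
  proof (rule the_equality)
    show "qmul X1 (Rep_qa x3) = qmul (mon 4 0 0) (qpow X2 4) + qone"
      using e by (metis Abs_qa_inverse Rep_times UNIV_I X1_def M_def x1_def)
  next
    fix y assume "qmul X1 y = qmul (mon 4 0 0) (qpow X2 4) + qone"
    then have "x1 * Abs_qa y = x1 * x3" using e
      by (simp add: Abs_times[symmetric] x1_def M_def X1_def)
    then have "M 0 (-1) 0 * (x1 * Abs_qa y) = M 0 (-1) 0 * (x1 * x3)" by simp
    then have "Abs_qa y = x3" by (simp add: mult.assoc[symmetric] x1_def M_mult)
    then show "y = Rep_qa x3" by (metis Abs_qa_inverse UNIV_I)
  qed
qed

lemma X4_eq: "X4 = Rep_qa x4"
proof -
  have "Abs_qa (qmul (mon 1 0 0) X3 + qone) = v 1 * x3 + 1"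
    by (simp add: Rep_times plus_qa_def Abs_qa_inverse one_qa_def v_def X3_eq M_def Rep_qa_inverse)
  also have "\<dots> = x2 * x4" by (simp add: Msimps)
  finally have e: "Abs_qa (qmul (mon 1 0 0) X3 + qone) = x2 * x4" .
  show ?thesis unfolding X4_def
  proof (rule the_equality)
    show "qmul X2 (Rep_qa x4) = qmul (mon 1 0 0) X3 + qone"
      using e by (metis Abs_qa_inverse Rep_times UNIV_I X2_def M_def x2_def)
  next
    fix y assume "qmul X2 y = qmul (mon 1 0 0) X3 + qone"
    then have "x2 * Abs_qa y = x2 * x4" using e
      by (simp add: Abs_times[symmetric] x2_def M_def X2_def)
    then have "M 0 0 (-1) * (x2 * Abs_qa y) = M 0 0 (-1) * (x2 * x4)" by simp
    then have "Abs_qa y = x4" by (simp add: mult.assoc[symmetric] x2_def M_mult)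
    then show "y = Rep_qa x4" by (metis Abs_qa_inverse UNIV_I)
  qed
qed


lemma power3_x: "(x::qa)^3 = x*(x*x)" by (simp add: power3_eq_cube mult.assoc)
lemma power4_x: "(x::qa)^4 = x*(x*(x*x))" by (simp add: power4_eq_xxxx mult.assoc)

lemma R1: "x1 * x2 = v 2 * (x2 * x1)" by (simp add: Msimps)
lemma R2: "x0 * x1 = v 2 * (x1 * x0)" by (simp add: Msimps)
lemma R3: "x2 * x3 = v 2 * (x3 * x2)" by (simp add: Msimps)
lemma R4: "x3 * x4 = v 2 * (x4 * x3)" by (simp add: Msimps ac_simps)
lemma S1: "x2 * x0 = v (-1) * x1 + 1" by (simp add: Msimps)
lemma S2: "x3 * x1 = v (-4) * x2^4 + 1" by (simp add: Msimps power4_x)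
lemma S3: "x4 * x2 = v (-1) * x3 + 1" by (simp add: Msimps)
lemma S4: "x4 * x1 = v (-3) * x2^3 + v 1 * x0" by (simp add: Msimps power3_x ac_simps)
lemma S5: "x4 = v (-1) * (x3 * x0) - v (-4) * x2^3" by (simp add: Msimps power3_x ac_simps)


lemma single_central: "qmul (Poly_Mapping.single (n,0,0) c) p = qmul p (Poly_Mapping.single (n,0,0) c)"
proof -
  have "qmul (Poly_Mapping.single (n,0,0) c) p = qmul (Poly_Mapping.single (n,0,0) c) (\<Sum>k\<in>Poly_Mapping.keys p. Poly_Mapping.single k (Poly_Mapping.lookup p k))"
    by (simp flip: pm_sum_singles)
  also have "\<dots> = qmul (\<Sum>k\<in>Poly_Mapping.keys p. Poly_Mapping.single k (Poly_Mapping.lookup p k)) (Poly_Mapping.single (n,0,0) c)"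
    unfolding qmul_sum_left[OF finite_keys] qmul_sum_right[OF finite_keys] qmul_single
    by (rule sum.cong[OF refl]) (auto simp: mulkey_def mult.commute add.commute split: prod.splits)
  finally show ?thesis by (simp flip: pm_sum_singles)
qed

definition scal :: "qt set" where "scal = {f. Poly_Mapping.keys f \<subseteq> {(n,0,0)|n. True}}"

lemma scal_central: assumes "f \<in> scal" shows "qmul f p = qmul p f"
proof -
  have fs: "f = (\<Sum>k\<in>Poly_Mapping.keys f. Poly_Mapping.single k (Poly_Mapping.lookup f k))" by (rule pm_sum_singles)
  have "qmul (\<Sum>k\<in>Poly_Mapping.keys f. Poly_Mapping.single k (Poly_Mapping.lookup f k)) p
      = qmul p (\<Sum>k\<in>Poly_Mapping.keys f. Poly_Mapping.single k (Poly_Mapping.lookup f k))"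
    unfolding qmul_sum_left[OF finite_keys] qmul_sum_right[OF finite_keys]
  proof (rule sum.cong[OF refl])
    fix k assume "k \<in> Poly_Mapping.keys f"
    then obtain n where "k = (n,0,0)" using assms by (auto simp: scal_def)
    then show "qmul (Poly_Mapping.single k (Poly_Mapping.lookup f k)) p = qmul p (Poly_Mapping.single k (Poly_Mapping.lookup f k))"
      by (simp add: single_central)
  qed
  then show ?thesis using fs by simp
qed

lemma central_qa: "f \<in> scal \<Longrightarrow> Abs_qa f * x = x * Abs_qa f"
  by (simp add: times_qa_def Abs_qa_inverse scal_central[of f])

lemma mon_scal: "mon k 0 0 \<in> scal" by (simp add: scal_def mon_def)

lemma v_central: "v k * x = x * v k"
  unfolding v_def M_def by (rule central_qa[OF mon_scal])

lemma v_add: "v k * v l = v (k + l)" by (simp add: v_def M_mult)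
lemma v_add2: "v k * (v l * x) = v (k + l) * x" by (simp add: v_add mult.assoc[symmetric])
lemma v_left: "x * (v k * y) = v k * (x * y)"
  by (simp add: mult.assoc[symmetric] v_central[of k x])
lemma v0: "v 0 = 1" by (simp add: v_def)

lemma v_left': "NO_MATCH (v j) x \<Longrightarrow> x * (v k * y) = v k * (x * y)"
  by (rule v_left)

lemmas vsimps = mult.assoc v_add v_add2 v_left' v0

definition EE :: "int \<times> int \<Rightarrow> qa" where "EE p = Abs_qa (E p)"
definition cs :: "int \<Rightarrow> qt set" where "cs N = {f. Poly_Mapping.keys f \<subseteq> {(n,0,0)|n. n \<le> N}}"
definition W :: "int \<times> int \<Rightarrow> int \<Rightarrow> qa set" where
  "W cd N = {x. \<exists>S f. finite S \<and> (\<forall>p\<in>S. prec p cd \<and> f p \<in> cs N) \<and> x = (\<Sum>p\<in>S. Abs_qa (f p) * EE p)}"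

lemma cs_scal: "f \<in> cs N \<Longrightarrow> f \<in> scal" by (auto simp: cs_def scal_def)
lemma cs_zero: "0 \<in> cs N" by (simp add: cs_def)
lemma cs_add: "f \<in> cs N \<Longrightarrow> g \<in> cs N \<Longrightarrow> f + g \<in> cs N"
  using keys_add[of f g] by (auto simp: cs_def)
lemma cs_neg: "f \<in> cs N \<Longrightarrow> - f \<in> cs N"
  by (auto simp: cs_def keys_def)
lemma cs_mono: "f \<in> cs N \<Longrightarrow> N \<le> N' \<Longrightarrow> f \<in> cs N'"
  by (auto simp: cs_def)
lemma cs_mon: "mon k 0 0 \<in> cs k" by (simp add: cs_def mon_def)
lemma cs_qone: "qone \<in> cs 0" by (simp add: cs_def mon_def qone_def)

lemma keys_qmul: "Poly_Mapping.keys (qmul f g) \<subseteq> {mulkey k l | k l. k \<in> Poly_Mapping.keys f \<and> l \<in> Poly_Mapping.keys g}"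
proof
  fix z assume z: "z \<in> Poly_Mapping.keys (qmul f g)"
  show "z \<in> {mulkey k l | k l. k \<in> Poly_Mapping.keys f \<and> l \<in> Poly_Mapping.keys g}"
  proof (rule ccontr)
    assume nz: "z \<notin> {mulkey k l | k l. k \<in> Poly_Mapping.keys f \<and> l \<in> Poly_Mapping.keys g}"
    have "Poly_Mapping.lookup (qmul f g) z = 0"
      unfolding qmul_def lookup_sum lookup_single
      by (rule sum.neutral, rule ballI, rule sum.neutral) (use nz in \<open>auto simp: when_def\<close>)
    then show False using z by (simp add: in_keys_iff)
  qed
qed

lemma cs_mult: assumes "f \<in> cs N" "g \<in> cs K" shows "qmul f g \<in> cs (N + K)"
proof -
  have "Poly_Mapping.keys (qmul f g) \<subseteq> {(n,0,0)|n. n \<le> N + K}"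
  proof
    fix z assume "z \<in> Poly_Mapping.keys (qmul f g)"
    then obtain k l where z: "z = mulkey k l" "k \<in> Poly_Mapping.keys f" "l \<in> Poly_Mapping.keys g"
      using keys_qmul by blast
    then obtain n m where "k = (n,0,0)" "n \<le> N" "l = (m,0,0)" "m \<le> K" using assms unfolding cs_def by blast
    then show "z \<in> {(n,0,0)|n. n \<le> N + K}" using z by (auto simp: mulkey_def)
  qed
  then show ?thesis by (simp add: cs_def)
qed

lemma W_zero: "0 \<in> W cd N"
  unfolding W_def by (rule CollectI, rule exI[of _ "{}"]) auto

lemma sum_if_sub: "finite U \<Longrightarrow> S \<subseteq> U \<Longrightarrow> (\<Sum>p\<in>U. if p \<in> S then F p else 0) = sum F S"
  by (simp add: sum.If_cases Int_absorb1)

lemma Abs_add: "Abs_qa (a + b) = Abs_qa a + Abs_qa b"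
  by (simp add: plus_qa_def Abs_qa_inverse)
lemma Abs_zero: "Abs_qa 0 = 0" by (simp add: zero_qa_def)
lemma Abs_neg: "Abs_qa (- a) = - Abs_qa a"
  by (simp add: uminus_qa_def Abs_qa_inverse)

lemma W_add: assumes "x \<in> W cd N" "y \<in> W cd N" shows "x + y \<in> W cd N"
proof -
  obtain S f where S: "finite S" "\<forall>p\<in>S. prec p cd \<and> f p \<in> cs N" "x = (\<Sum>p\<in>S. Abs_qa (f p) * EE p)"
    using assms(1) unfolding W_def by blast
  obtain T g where T: "finite T" "\<forall>p\<in>T. prec p cd \<and> g p \<in> cs N" "y = (\<Sum>p\<in>T. Abs_qa (g p) * EE p)"
    using assms(2) unfolding W_def by blast
  define h where "h p = (if p \<in> S then f p else 0) + (if p \<in> T then g p else 0)" for p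
  have fin: "finite (S \<union> T)" using S T by simp
  have "(\<Sum>p\<in>S \<union> T. Abs_qa (h p) * EE p) = (\<Sum>p\<in>S \<union> T. (if p \<in> S then Abs_qa (f p) * EE p else 0) + (if p \<in> T then Abs_qa (g p) * EE p else 0))"
    by (rule sum.cong[OF refl]) (simp add: h_def Abs_add Abs_zero distrib_right)
  also have "\<dots> = x + y"
    unfolding sum.distrib using fin by (simp add: sum_if_sub S T)
  finally have e: "x + y = (\<Sum>p\<in>S \<union> T. Abs_qa (h p) * EE p)" by simp
  have "\<forall>p\<in>S \<union> T. prec p cd \<and> h p \<in> cs N"
    using S T by (auto simp: h_def intro!: cs_add cs_zero)
  then show ?thesis unfolding W_def using fin e by blast
qed

lemma W_sum: "finite S \<Longrightarrow> (\<And>s. s \<in> S \<Longrightarrow> g s \<in> W cd N) \<Longrightarrow> sum g S \<in> W cd N"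
  by (induction S rule: finite_induct) (auto intro: W_zero W_add)

lemma W_scal: assumes "f \<in> cs K" "x \<in> W cd N" shows "Abs_qa f * x \<in> W cd (K + N)"
proof -
  obtain S g where S: "finite S" "\<forall>p\<in>S. prec p cd \<and> g p \<in> cs N" "x = (\<Sum>p\<in>S. Abs_qa (g p) * EE p)"
    using assms(2) unfolding W_def by blast
  have "Abs_qa f * x = (\<Sum>p\<in>S. Abs_qa f * (Abs_qa (g p) * EE p))"
    unfolding S(3) by (rule sum_distrib_left)
  also have "\<dots> = (\<Sum>p\<in>S. Abs_qa (qmul f (g p)) * EE p)"
    unfolding Abs_times mult.assoc ..
  finally have "Abs_qa f * x = (\<Sum>p\<in>S. Abs_qa (qmul f (g p)) * EE p)" .
  moreover have "\<forall>p\<in>S. prec p cd \<and> qmul f (g p) \<in> cs (K + N)"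
    using S(2) cs_mult[OF assms(1)] by simp
  ultimately show ?thesis unfolding W_def using S(1)
    by (intro CollectI exI[of _ S] exI[of _ "\<lambda>p. qmul f (g p)"]) simp
qed

lemma W_neg: assumes "x \<in> W cd N" shows "- x \<in> W cd N"
proof -
  obtain S g where S: "finite S" "\<forall>p\<in>S. prec p cd \<and> g p \<in> cs N" "x = (\<Sum>p\<in>S. Abs_qa (g p) * EE p)"
    using assms unfolding W_def by blast
  have "- x = (\<Sum>p\<in>S. Abs_qa (- g p) * EE p)"
    by (simp add: S(3) Abs_neg sum_negf)
  moreover have "\<forall>p\<in>S. prec p cd \<and> - g p \<in> cs N"
    using S cs_neg by blast
  ultimately show ?thesis unfolding W_def using S(1)
    by (intro CollectI exI[of _ S] exI[of _ "\<lambda>p. - g p"]) simp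
qed

lemma W_diff: "x \<in> W cd N \<Longrightarrow> y \<in> W cd N \<Longrightarrow> x - y \<in> W cd N"
proof -
  assume "x \<in> W cd N" "y \<in> W cd N"
  then have "x + - y \<in> W cd N" by (intro W_add W_neg)
  then show ?thesis by (simp only: diff_conv_add_uminus)
qed

lemma W_v: "x \<in> W cd N \<Longrightarrow> v k * x \<in> W cd (N + k)"
  using W_scal[OF cs_mon] by (simp add: v_def M_def add.commute)

lemma W_E: "prec p cd \<Longrightarrow> EE p \<in> W cd 0"
  unfolding W_def
  by (rule CollectI, rule exI[of _ "{p}"], rule exI[of _ "\<lambda>_. qone"]) (simp add: cs_qone flip: one_qa_def)

lemma pos_le: "pos (- a) \<le> pos (- c) \<longleftrightarrow> min a 0 \<ge> min c 0"
  by (auto simp: pos_def max_def min_def)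

lemma prec_iff: "prec (a', b') (c, d) \<longleftrightarrow> min a' 0 \<ge> min c 0 \<and> min b' 0 \<ge> min d 0"
  by (simp add: prec_def pos_le)

lemma W_mono: assumes "x \<in> W (c, d) N" "min c' 0 \<le> min c 0" "min d' 0 \<le> min d 0" "N \<le> N'"
  shows "x \<in> W (c', d') N'"
proof -
  obtain S g where S: "finite S" "\<forall>p\<in>S. prec p (c,d) \<and> g p \<in> cs N" "x = (\<Sum>p\<in>S. Abs_qa (g p) * EE p)"
    using assms unfolding W_def by blast
  have "\<forall>p\<in>S. prec p (c',d') \<and> g p \<in> cs N'"
  proof
    fix p assume "p \<in> S"
    then have "prec p (c,d)" "g p \<in> cs N" using S by auto
    then show "prec p (c',d') \<and> g p \<in> cs N'" using assms cs_mono
      by (cases p) (auto simp: prec_iff min_def split: if_splits)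
  qed
  then show ?thesis using S unfolding W_def
    by (intro CollectI exI[of _ S] exI[of _ g]) simp
qed

lemma W_lin: assumes "x \<in> W cd N" "\<And>p. prec p cd \<Longrightarrow> L * EE p \<in> W cd' K"
  shows "L * x \<in> W cd' (N + K)"
proof -
  obtain S g where S: "finite S" "\<forall>p\<in>S. prec p cd \<and> g p \<in> cs N" "x = (\<Sum>p\<in>S. Abs_qa (g p) * EE p)"
    using assms unfolding W_def by blast
  have "L * x = (\<Sum>p\<in>S. Abs_qa (g p) * (L * EE p))"
    unfolding S(3) sum_distrib_left
    by (rule sum.cong[OF refl]) (metis S(2) central_qa cs_scal mult.assoc)
  also have "\<dots> \<in> W cd' (N + K)"
    by (rule W_sum[OF S(1)]) (use S assms(2) W_scal in blast)
  finally show ?thesis .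
qed

lemma cs_neg1: "cs (-1) = negcoef"
  by (auto simp: cs_def negcoef_def)

lemma W_Sigma: assumes "x \<in> W cd (-1)" shows "Rep_qa x \<in> Sigma cd"
proof -
  obtain S g where S: "finite S" "\<forall>p\<in>S. prec p cd \<and> g p \<in> cs (-1)" "x = (\<Sum>p\<in>S. Abs_qa (g p) * EE p)"
    using assms unfolding W_def by blast
  have "Rep_qa x = (\<Sum>p\<in>S. qmul (g p) (E p))"
    by (simp add: S(3) Rep_sum Rep_times Abs_qa_inverse EE_def)
  then show ?thesis unfolding Sigma_def using S cs_neg1
    by (intro CollectI exI[of _ S] exI[of _ g]) simp
qed


lemma qc1: assumes "y * x = v c * (x * y)" shows "y ^ n * x = v (c * int n) * (x * y ^ n)"
proof (induction n)
  case 0 then show ?case by (simp add: v0)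
next
  case (Suc n)
  have "y ^ Suc n * x = y ^ n * (y * x)" by (simp only: power_Suc2 mult.assoc)
  also have "\<dots> = v c * (y ^ n * x * y)" by (simp add: assms v_left' mult.assoc)
  also have "\<dots> = v (c * int (Suc n)) * (x * y ^ Suc n)"
    by (simp add: Suc v_add2 mult.assoc power_commutes algebra_simps)
  finally show ?case .
qed

lemma qc2: assumes "y * x = v c * (x * y)" shows "y * x ^ k = v (c * int k) * (x ^ k * y)"
proof (induction k)
  case 0 then show ?case by (simp add: v0)
next
  case (Suc k)
  have "y * x ^ Suc k = (y * x) * x ^ k" by (simp add: mult.assoc)
  also have "\<dots> = v c * (x * (y * x ^ k))" by (simp only: assms mult.assoc)
  also have "\<dots> = v c * (v (c * int k) * (x * (x ^ k * y)))" by (subst Suc.IH, subst v_left, rule refl)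
  also have "\<dots> = v (c * int (Suc k)) * (x ^ Suc k * y)" by (simp add: v_add2 mult.assoc algebra_simps)
  finally show ?case .
qed

lemma qcflip: assumes "y * x = v c * (x * y)" shows "x * y = v (- c) * (y * x)"
  by (simp add: assms v_add2 v0)

lemma qc: assumes "y * x = v c * (x * y)" shows "y ^ n * x ^ k = v (c * int n * int k) * (x ^ k * y ^ n)"
proof -
  have h: "y ^ n * x = v (c * int n) * (x * y ^ n)" by (rule qc1[OF assms])
  show ?thesis using qc2[OF h, of k] by (simp add: v_add2 algebra_simps)
qed

lemma x1x2: "x1 ^ i * x2 = v (2 * int i) * (x2 * x1 ^ i)" using qc1[OF R1] by simp
lemma x2x1: "x2 ^ j * x1 = v (- 2 * int j) * (x1 * x2 ^ j)" using qc1[OF qcflip[OF R1]] by simp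
lemma x2x1': "x2 * x1 ^ i = v (- 2 * int i) * (x1 ^ i * x2)" using qc2[OF qcflip[OF R1]] by simp
lemma x0x1: "x0 ^ m * x1 = v (2 * int m) * (x1 * x0 ^ m)" using qc1[OF R2] by simp
lemma x0x1': "x0 * x1 ^ i = v (2 * int i) * (x1 ^ i * x0)" using qc2[OF R2] by simp
lemma x3x2: "x3 ^ n * x2 = v (- 2 * int n) * (x2 * x3 ^ n)" using qc1[OF qcflip[OF R3]] by simp
lemma x4x3: "x4 * x3 ^ n = v (- 2 * int n) * (x3 ^ n * x4)" using qc2[OF qcflip[OF R4]] by simp

definition Zf :: "int \<Rightarrow> qa" where "Zf a = x3 ^ pos (- a) * x1 ^ pos a"
definition Yf :: "int \<Rightarrow> qa" where "Yf b = x2 ^ pos b * x0 ^ pos (- b)"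

lemma Zf_pos: "Zf (int i) = x1 ^ i" by (simp add: Zf_def pos_def)
lemma Zf_neg: "Zf (- int n) = x3 ^ n" by (simp add: Zf_def pos_def)
lemma Yf_pos: "Yf (int j) = x2 ^ j" by (simp add: Yf_def pos_def)
lemma Yf_neg: "Yf (- int m) = x0 ^ m" by (simp add: Yf_def pos_def)

lemma X1_eq: "X1 = Rep_qa x1" by (simp add: X1_def x1_def M_def Abs_qa_inverse)
lemma X2_eq: "X2 = Rep_qa x2" by (simp add: X2_def x2_def M_def Abs_qa_inverse)

lemma E_Rep: "E (a, b) = Rep_qa (v (- a * b) * (x3 ^ pos (- a) * (x1 ^ pos a * (x2 ^ pos b * x0 ^ pos (- b)))))"
  unfolding Rep_times Rep_pow X0_eq[symmetric] X1_eq[symmetric] X2_eq[symmetric] X3_eq[symmetric]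
  by (simp add: E_def v_def M_def Abs_qa_inverse)

lemma EE_eq: "EE (a, b) = v (- a * b) * (Zf a * Yf b)"
  unfolding EE_def E_Rep Rep_qa_inverse Zf_def Yf_def by (simp add: mult.assoc)

lemma Zf_x2: "Zf a * x2 = v (2 * a) * (x2 * Zf a)"
proof (cases "a \<ge> 0")
  case True
  then obtain i where "a = int i" by (intro that[of "nat a"]) simp
  then show ?thesis by (simp add: Zf_pos x1x2)
next
  case False
  then obtain n where "a = - int n" by (intro that[of "nat (- a)"]) simp
  then show ?thesis by (simp add: Zf_neg x3x2)
qed

lemma Yf_x1: "Yf b * x1 = v (- 2 * b) * (x1 * Yf b)"
proof (cases "b \<ge> 0")
  case True
  then obtain i where "b = int i" by (intro that[of "nat b"]) simp
  then show ?thesis by (simp add: Yf_pos x2x1)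
next
  case False
  then obtain n where "b = - int n" by (intro that[of "nat (- b)"]) simp
  then show ?thesis by (simp add: Yf_neg x0x1)
qed



lemma rassoc: "a * b = v c * (b' * a') \<Longrightarrow> a * (b * z) = v c * (b' * (a' * z))"
  by (metis mult.assoc v_left)

lemma v_cong: "k = l \<Longrightarrow> v k * X = v l * X" by simp

lemmas x2x1'a = rassoc[OF x2x1']

lemma lassoc: "a * b = (c::qa) \<Longrightarrow> a * (b * z) = c * z"
  by (metis mult.assoc)

lemma pow_comm_a: "(x::qa) ^ i * (x * z) = x * (x ^ i * z)"
  by (simp add: mult.assoc[symmetric] power_commutes)

lemmas S1a = lassoc[OF S1, simplified distrib_right mult_1_left mult.assoc]


lemma X2E_pos: assumes "a \<ge> 0" "b \<ge> 0" shows "x2 * EE (a, b) = v (- a) * EE (a, b + 1)"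
proof -
  obtain i where a: "a = int i" using assms by (intro that[of "nat a"]) simp
  obtain j where b: "b = int j" using assms by (intro that[of "nat b"]) simp
  have b1: "b + 1 = int (Suc j)" using b by simp
  show ?thesis unfolding EE_eq b1 unfolding a b Zf_pos Yf_pos
    by (simp add: mult.assoc v_add2 v_left' x2x1'a algebra_simps) (rule v_cong, algebra)
qed

lemma X2E_neg: assumes "a \<ge> 0" "b < 0" shows "x2 * EE (a, b) = v (- a) * EE (a, b + 1) + v (b - a) * EE (a + 1, b + 1)"
proof -
  obtain i where a: "a = int i" using assms by (intro that[of "nat a"]) simp
  obtain m where b: "b = - int (Suc m)" using assms by (intro that[of "nat (- b - 1)"]) simp
  have b1: "b + 1 = - int m" using b by simp
  have a1: "a + 1 = int (Suc i)" using a by simp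
  show ?thesis unfolding EE_eq b1 a1 unfolding a b Zf_pos Yf_neg
    apply (simp add: mult.assoc v_add2 v_left' x2x1'a S1a pow_comm_a algebra_simps)
    done
qed


lemma X2W: assumes "a \<ge> 0" shows "x2 * EE (a, b) \<in> W (a, b + 1) 0"
proof -
  have "v (- a) * EE (a, b + 1) \<in> W (a, b + 1) (0 + - a)"
    by (rule W_v, rule W_E) (simp add: prec_iff)
  then have 1: "v (- a) * EE (a, b + 1) \<in> W (a, b + 1) 0"
    by (rule W_mono) (use assms in simp_all)
  show ?thesis
  proof (cases "b \<ge> 0")
    case True
    then show ?thesis using 1 assms by (simp add: X2E_pos)
  next
    case False
    have "v (b - a) * EE (a + 1, b + 1) \<in> W (a, b + 1) (0 + (b - a))"
      by (rule W_v, rule W_E) (use assms in \<open>simp add: prec_iff\<close>)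
    then have 2: "v (b - a) * EE (a + 1, b + 1) \<in> W (a, b + 1) 0"
      by (rule W_mono) (use assms False in simp_all)
    show ?thesis using False assms by (simp add: X2E_neg W_add[OF 1 2])
  qed
qed

lemma X2pow: assumes "c \<ge> 0" "x \<in> W (c, d) N" shows "x2 ^ k * x \<in> W (c, d + int k) N"
proof (induction k)
  case 0 then show ?case using assms by simp
next
  case (Suc k)
  have "x2 * (x2 ^ k * x) \<in> W (c, d + int (Suc k)) (N + 0)"
  proof (rule W_lin[OF Suc])
    fix p assume "prec p (c, d + int k)"
    then obtain p1 p2 where p: "p = (p1, p2)" "min p1 0 \<ge> min c 0" "min p2 0 \<ge> min (d + int k) 0"
      by (cases p) (auto simp: prec_iff)
    then have p1: "p1 \<ge> 0" using assms by (simp add: min_def split: if_splits)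
    then have "x2 * EE (p1, p2) \<in> W (p1, p2 + 1) 0" by (rule X2W)
    then have "x2 * EE (p1, p2) \<in> W (c, d + int (Suc k)) 0"
      by (rule W_mono) (use p assms p1 in \<open>auto simp: min_def split: if_splits\<close>)
    then show "x2 * EE p \<in> W (c, d + int (Suc k)) 0" using p by simp
  qed
  then show ?case by (simp add: mult.assoc)
qed


lemmas S2a = lassoc[OF S2, simplified distrib_right mult_1_left mult.assoc]

lemma item2_neg: assumes "a \<le> 0" shows "v b * (x3 * EE (a, b)) = EE (a - 1, b)"
proof -
  obtain n where a: "a = - int n" using assms by (intro that[of "nat (- a)"]) simp
  have a1: "a - 1 = - int (Suc n)" using a by simp
  show ?thesis unfolding EE_eq a1 unfolding a Zf_neg
    by (simp add: mult.assoc v_add2 v_left' algebra_simps)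
qed

lemma item2_pos: assumes "a \<ge> 1" shows "v b * (x3 * EE (a, b)) = EE (a - 1, b) + v (-4) * (x2 ^ 4 * EE (a - 1, b))"
proof -
  obtain i where a: "a = int (Suc i)" using assms by (intro that[of "nat (a - 1)"]) simp
  have a1: "a - 1 = int i" using a by simp
  show ?thesis unfolding EE_eq a1 unfolding a Zf_pos
    apply (simp add: mult.assoc v_add2 v_left' S2a algebra_simps)
    done
qed


lemma item2W: "v b * (x3 * EE (a, b)) - EE (a - 1, b) \<in> W (a - 1, b + 4) (-1)"
proof (cases "a \<le> 0")
  case True
  then show ?thesis by (simp add: item2_neg W_zero)
next
  case False
  have "EE (a - 1, b) \<in> W (a - 1, b) 0" by (rule W_E) (simp add: prec_iff)
  then have "x2 ^ 4 * EE (a - 1, b) \<in> W (a - 1, b + int 4) 0"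
    by (rule X2pow[rotated]) (use False in simp)
  then have "v (-4) * (x2 ^ 4 * EE (a - 1, b)) \<in> W (a - 1, b + 4) (0 + -4)"
    by (intro W_v) simp
  then have "v (-4) * (x2 ^ 4 * EE (a - 1, b)) \<in> W (a - 1, b + 4) (-1)"
    by (rule W_mono) simp_all
  then show ?thesis using False by (simp add: item2_pos)
qed

lemma X3W: "x3 * EE (a, b) \<in> W (a - 1, b) (- b)"
proof -
  have r: "v b * (x3 * EE (a, b)) - EE (a - 1, b) \<in> W (a - 1, b) 0"
    by (rule W_mono[OF item2W]) simp_all
  have e: "EE (a - 1, b) \<in> W (a - 1, b) 0" by (rule W_E) (simp add: prec_iff)
  have "v (- b) * ((v b * (x3 * EE (a, b)) - EE (a - 1, b)) + EE (a - 1, b)) \<in> W (a - 1, b) (0 + - b)"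
    by (rule W_v, rule W_add[OF r e])
  then show ?thesis by (simp add: v_add2 v0)
qed

lemma X3iter: assumes "x \<in> W (c, d) N" "\<beta> \<le> min d 0"
  shows "v (\<beta> * int n) * (x3 ^ n * x) \<in> W (min c 0 - int n, d) N"
proof (induction n)
  case 0
  have "x \<in> W (min c 0 - int 0, d) N" by (rule W_mono[OF assms(1)]) auto
  then show ?case by (simp add: v0)
next
  case (Suc n)
  have "(v \<beta> * x3) * (v (\<beta> * int n) * (x3 ^ n * x)) \<in> W (min c 0 - int (Suc n), d) (N + 0)"
  proof (rule W_lin[OF Suc])
    fix p assume "prec p (min c 0 - int n, d)"
    then obtain p1 p2 where p: "p = (p1, p2)" "min p1 0 \<ge> min c 0 - int n" "min p2 0 \<ge> min d 0"
      by (cases p) (auto simp: prec_iff)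
    have "v \<beta> * (x3 * EE (p1, p2)) \<in> W (p1 - 1, p2) (- p2 + \<beta>)" by (rule W_v[OF X3W])
    then have "v \<beta> * (x3 * EE (p1, p2)) \<in> W (min c 0 - int (Suc n), d) 0"
      by (rule W_mono) (use p assms(2) in \<open>auto simp: min_def split: if_splits\<close>)
    then show "v \<beta> * x3 * EE p \<in> W (min c 0 - int (Suc n), d) 0" using p by (simp add: mult.assoc)
  qed
  then show ?case by (simp add: mult.assoc v_add2 v_left' algebra_simps)
qed


lemma item3_pos: assumes "a \<ge> 0" shows "v b * (EE (a, b) * x1) = EE (a + 1, b)"
proof -
  obtain i where a: "a = int i" using assms by (intro that[of "nat a"]) simp
  have a1: "a + 1 = int (Suc i)" using a by simp
  show ?thesis unfolding EE_eq a1 unfolding a Zf_pos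
    by (simp add: mult.assoc v_add2 v_left' Yf_x1 pow_comm_a algebra_simps)
qed

lemma item3_neg: assumes "a < 0"
  shows "v b * (EE (a, b) * x1) = EE (a + 1, b) + v (- a * b - b - 4) * (x3 ^ nat (- a - 1) * (x2 ^ 4 * Yf b))"
proof -
  obtain n where a: "a = - int (Suc n)" using assms by (intro that[of "nat (- a - 1)"]) simp
  have a1: "a + 1 = - int n" using a by simp
  have n: "nat (- a - 1) = n" using a by simp
  show ?thesis unfolding EE_eq a1 n unfolding a Zf_neg power_Suc2
    by (simp add: mult.assoc v_add2 v_left' Yf_x1 S2a algebra_simps)
qed


lemma Yf_EE: "Yf b = EE (0, b)" by (simp add: EE_eq Zf_def pos_def v0)

lemma item3W: "v b * (EE (a, b) * x1) - EE (a + 1, b) \<in> W (a + 1, b + 4) (-1)"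
proof (cases "a \<ge> 0")
  case True
  then show ?thesis by (simp add: item3_pos W_zero)
next
  case False
  then have an: "a < 0" by simp
  obtain n where a: "a = - int (Suc n)" using an by (intro that[of "nat (- a - 1)"]) simp
  have n: "nat (- a - 1) = n" using a by simp
  let ?R = "v (- a * b - b - 4) * (x3 ^ n * (x2 ^ 4 * Yf b))"
  have diff: "v b * (EE (a, b) * x1) - EE (a + 1, b) = ?R" using item3_neg[OF an] n by simp
  show ?thesis
  proof (cases "b \<ge> 0")
    case True
    obtain j where b: "b = int j" using True by (intro that[of "nat b"]) simp
    have a1: "a + 1 = - int n" using a by simp
    have b4: "b + 4 = int (4 + j)" using b by simp
    have zf: "Zf (a + 1) = x3 ^ n" unfolding a1 Zf_neg ..
    have yf: "Yf (b + 4) = x2 ^ 4 * x2 ^ j" unfolding b4 Yf_pos power_add ..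
    have yb: "Yf b = x2 ^ j" unfolding b Yf_pos ..
    have "?R = v (4 * a) * EE (a + 1, b + 4)"
      unfolding EE_eq zf yf yb v_add2
      by (rule v_cong) (simp add: algebra_simps)
    moreover have "v (4 * a) * EE (a + 1, b + 4) \<in> W (a + 1, b + 4) (0 + 4 * a)"
      by (rule W_v, rule W_E) (simp add: prec_iff)
    ultimately have "?R \<in> W (a + 1, b + 4) (0 + 4 * a)" by simp
    then have "?R \<in> W (a + 1, b + 4) (-1)" by (rule W_mono) (use an in simp_all)
    then show ?thesis using diff by simp
  next
    case False
    define \<beta> where "\<beta> = min (b + 4) 0"
    have "EE (0, b) \<in> W (0, b) 0" by (rule W_E) (simp add: prec_iff)
    then have "x2 ^ 4 * EE (0, b) \<in> W (0, b + int 4) 0" by (rule X2pow[rotated]) simp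
    then have "v (\<beta> * int n) * (x3 ^ n * (x2 ^ 4 * EE (0, b))) \<in> W (min 0 0 - int n, b + int 4) 0"
      by (rule X3iter) (simp add: \<beta>_def)
    then have m: "v (- a * b - b - 4 - \<beta> * int n) * (v (\<beta> * int n) * (x3 ^ n * (x2 ^ 4 * EE (0, b))))
        \<in> W (min 0 0 - int n, b + int 4) (0 + (- a * b - b - 4 - \<beta> * int n))"
      by (rule W_v)
    have eq: "v (- a * b - b - 4 - \<beta> * int n) * (v (\<beta> * int n) * (x3 ^ n * (x2 ^ 4 * EE (0, b)))) = ?R"
      by (simp add: v_add2 Yf_EE)
    have le: "- a * b - b - 4 - \<beta> * int n \<le> -1"
    proof -
      have "b - \<beta> \<le> 0" using False by (simp add: \<beta>_def)
      then have "int n * (b - \<beta>) \<le> 0" by (simp add: mult_nonneg_nonpos)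
      moreover have "- a * b - b - 4 - \<beta> * int n = int n * (b - \<beta>) - 4" by (simp add: a algebra_simps)
      ultimately show ?thesis by simp
    qed
    have "?R \<in> W (min 0 0 - int n, b + int 4) (0 + (- a * b - b - 4 - \<beta> * int n))"
      using m unfolding eq .
    then have "?R \<in> W (a + 1, b + 4) (-1)"
      by (rule W_mono) (use le in \<open>simp_all add: a\<close>)
    then show ?thesis using diff by simp
  qed
qed


lemmas S3a = lassoc[OF S3, simplified distrib_right mult_1_left mult.assoc]
lemmas S4a = lassoc[OF S4, simplified distrib_right mult_1_left mult.assoc]
lemmas Zf_x2a = rassoc[OF Zf_x2]
lemmas x0x1'a = rassoc[OF x0x1']
lemmas x4x3a = rassoc[OF x4x3]

lemma item1_neg: assumes "b \<le> 0" shows "v a * (EE (a, b) * x0) = EE (a, b - 1)"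
proof -
  obtain m where b: "b = - int m" using assms by (intro that[of "nat (- b)"]) simp
  have b1: "b - 1 = - int (Suc m)" using b by simp
  show ?thesis unfolding EE_eq b1 unfolding b Yf_neg power_Suc2
    by (simp add: mult.assoc v_add2 v_left' algebra_simps)
qed

lemma item1_pos: assumes "b \<ge> 1" shows "v a * (EE (a, b) * x0) = EE (a, b - 1) + v (-1) * (EE (a, b - 1) * x1)"
proof -
  obtain j where b: "b = int (Suc j)" using assms by (intro that[of "nat (b - 1)"]) simp
  have b1: "b - 1 = int j" using b by simp
  show ?thesis unfolding EE_eq b1 unfolding b Yf_pos power_Suc2
    by (simp add: mult.assoc v_add2 v_left' S1 algebra_simps)
qed

lemma item1W: "v a * (EE (a, b) * x0) - EE (a, b - 1) \<in> W (a + 1, b - 1) (-1)"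
proof (cases "b \<le> 0")
  case True
  then show ?thesis by (simp add: item1_neg W_zero)
next
  case False
  then have b1: "b \<ge> 1" by simp
  have T: "v (b - 1) * (EE (a, b - 1) * x1) - EE (a + 1, b - 1) \<in> W (a + 1, b - 1) 0"
    by (rule W_mono[OF item3W[of "b - 1" a]]) (use b1 in simp_all)
  have e: "EE (a + 1, b - 1) \<in> W (a + 1, b - 1) 0" by (rule W_E) (simp add: prec_iff)
  have "v (- b) * ((v (b - 1) * (EE (a, b - 1) * x1) - EE (a + 1, b - 1)) + EE (a + 1, b - 1)) \<in> W (a + 1, b - 1) (0 + - b)"
    by (rule W_v, rule W_add[OF T e])
  then have "v (-1) * (EE (a, b - 1) * x1) \<in> W (a + 1, b - 1) (0 + - b)"
    by (simp add: v_add2)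
  then have "v (-1) * (EE (a, b - 1) * x1) \<in> W (a + 1, b - 1) (-1)"
    by (rule W_mono) (use b1 in simp_all)
  then show ?thesis using b1 by (simp add: item1_pos)
qed

lemma item4_eq: assumes "b > 0" shows "v (- a) * (x4 * EE (a, b)) = EE (a, b - 1) + v (-1) * (x3 * EE (a, b - 1))"
proof -
  obtain j where b: "b = int (Suc j)" using assms by (intro that[of "nat (b - 1)"]) simp
  have b1: "b - 1 = int j" using b by simp
  show ?thesis unfolding EE_eq b1 unfolding b Yf_pos
    by (simp add: mult.assoc v_add2 v_left' Zf_x2a S3a algebra_simps)
qed

lemma item4W: assumes "b > 0" shows "v (- a) * (x4 * EE (a, b)) - EE (a, b - 1) \<in> W (a - 1, b - 1) (-1)"
proof -
  have "v (-1) * (x3 * EE (a, b - 1)) \<in> W (a - 1, b - 1) (- (b - 1) + -1)"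
    by (rule W_v[OF X3W])
  then have "v (-1) * (x3 * EE (a, b - 1)) \<in> W (a - 1, b - 1) (-1)"
    by (rule W_mono) (use assms in simp_all)
  then show ?thesis using assms by (simp add: item4_eq)
qed

lemma item5_eq: assumes "a > 0" "b \<le> 0"
  shows "v (b - a) * (x4 * EE (a, b)) = EE (a - 1, b - 1) + v (- a - 3) * (x2 ^ 3 * EE (a - 1, b))"
proof -
  obtain i where a: "a = int (Suc i)" using assms by (intro that[of "nat (a - 1)"]) simp
  obtain m where b: "b = - int m" using assms by (intro that[of "nat (- b)"]) simp
  have a1: "a - 1 = int i" using a by simp
  have b1: "b - 1 = - int (Suc m)" using b by simp
  show ?thesis unfolding EE_eq a1 b1 unfolding a b Zf_pos Yf_neg
    by (simp add: mult.assoc v_add2 v_left' S4a x0x1'a algebra_simps)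
qed

lemma item5W: assumes "a > 0" "b \<le> 0"
  shows "v (b - a) * (x4 * EE (a, b)) - EE (a - 1, b - 1) \<in> W (a - 1, b + 3) (-1)"
proof -
  have "EE (a - 1, b) \<in> W (a - 1, b) 0" by (rule W_E) (simp add: prec_iff)
  then have "x2 ^ 3 * EE (a - 1, b) \<in> W (a - 1, b + int 3) 0"
    by (rule X2pow[rotated]) (use assms in simp)
  then have "v (- a - 3) * (x2 ^ 3 * EE (a - 1, b)) \<in> W (a - 1, b + 3) (0 + (- a - 3))"
    by (intro W_v) simp
  then have "v (- a - 3) * (x2 ^ 3 * EE (a - 1, b)) \<in> W (a - 1, b + 3) (-1)"
    by (rule W_mono) (use assms in simp_all)
  then show ?thesis using assms by (simp add: item5_eq)
qed


lemma item6_eq: assumes "a \<le> 0" "b \<le> 0"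
  shows "v (b - a) * (x4 * EE (a, b)) = EE (a - 1, b - 1) - v (a + b - a * b - 4) * (x3 ^ nat (- a) * (x2 ^ 3 * Yf b))"
proof -
  obtain n where a: "a = - int n" using assms by (intro that[of "nat (- a)"]) simp
  obtain m where b: "b = - int m" using assms by (intro that[of "nat (- b)"]) simp
  have a1: "a - 1 = - int (Suc n)" using a by simp
  have b1: "b - 1 = - int (Suc m)" using b by simp
  have n: "nat (- a) = n" using a by simp
  have st: "x4 * EE (a, b) = v (- a * b - 2 * int n) * (x3 ^ n * (x4 * x0 ^ m))"
    unfolding EE_eq unfolding a b Zf_neg Yf_neg
    by (simp add: mult.assoc v_add2 v_left' x4x3a algebra_simps)
  show ?thesis unfolding st unfolding EE_eq a1 b1 n unfolding Yf_neg Zf_neg unfolding S5 b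
    by (simp add: mult.assoc v_add2 v_left' pow_comm_a algebra_simps a Yf_neg)
qed

lemma item6W: assumes "a \<le> 0" "b \<le> 0"
  shows "v (b - a) * (x4 * EE (a, b)) - EE (a - 1, b - 1) \<in> W (a, b) (-1)"
proof -
  obtain n where a: "a = - int n" using assms by (intro that[of "nat (- a)"]) simp
  have n: "nat (- a) = n" using a by simp
  let ?R = "v (a + b - a * b - 4) * (x3 ^ n * (x2 ^ 3 * Yf b))"
  have diff: "v (b - a) * (x4 * EE (a, b)) - EE (a - 1, b - 1) = - ?R"
    using item6_eq[OF assms] n by simp
  define \<beta> where "\<beta> = min (b + 3) 0"
  have "EE (0, b) \<in> W (0, b) 0" by (rule W_E) (simp add: prec_iff)
  then have "x2 ^ 3 * EE (0, b) \<in> W (0, b + int 3) 0" by (rule X2pow[rotated]) simp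
  then have "v (\<beta> * int n) * (x3 ^ n * (x2 ^ 3 * EE (0, b))) \<in> W (min 0 0 - int n, b + int 3) 0"
    by (rule X3iter) (simp add: \<beta>_def)
  then have m: "v (a + b - a * b - 4 - \<beta> * int n) * (v (\<beta> * int n) * (x3 ^ n * (x2 ^ 3 * EE (0, b))))
      \<in> W (min 0 0 - int n, b + int 3) (0 + (a + b - a * b - 4 - \<beta> * int n))"
    by (rule W_v)
  have eq: "v (a + b - a * b - 4 - \<beta> * int n) * (v (\<beta> * int n) * (x3 ^ n * (x2 ^ 3 * EE (0, b)))) = ?R"
    by (simp add: v_add2 Yf_EE)
  have le: "a + b - a * b - 4 - \<beta> * int n \<le> -1"
  proof -
    have "b - \<beta> \<le> 0" using assms by (simp add: \<beta>_def)
    then have "int n * (b - \<beta>) \<le> 0" by (simp add: mult_nonneg_nonpos)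
    moreover have "a + b - a * b - 4 - \<beta> * int n = - int n + b - 4 + int n * (b - \<beta>)"
      by (simp add: a algebra_simps)
    ultimately show ?thesis using assms by simp
  qed
  have "?R \<in> W (min 0 0 - int n, b + int 3) (0 + (a + b - a * b - 4 - \<beta> * int n))"
    using m unfolding eq .
  then have "?R \<in> W (a, b) (-1)"
    by (rule W_mono) (use le assms in \<open>simp_all add: a\<close>)
  then show ?thesis unfolding diff by (rule W_neg)
qed


lemma Rep_v: "Rep_qa (v k) = mon k 0 0" by (simp add: v_def M_def Abs_qa_inverse)
lemma Rep_EE: "Rep_qa (EE p) = E p" by (simp add: EE_def Abs_qa_inverse)

lemma transl:
  "qmul (qmul (mon k 0 0) (E p)) Y = Rep_qa (v k * (EE p * Abs_qa Y))"
  "qmul (qmul (mon k 0 0) Y) (E p) = Rep_qa (v k * (Abs_qa Y * EE p))"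
  by (simp_all add: Rep_times Rep_v Rep_EE Abs_qa_inverse qmul_assoc)

lemma W_Sigma_diff: "x - EE p \<in> W cd (-1) \<Longrightarrow> Rep_qa x - E p \<in> Sigma cd"
  using W_Sigma[of "x - EE p" cd] by (simp add: Rep_minus Rep_EE)

lemma Abs_X: "Abs_qa X0 = x0" "Abs_qa X1 = x1" "Abs_qa X3 = x3" "Abs_qa X4 = x4"
  by (simp_all add: X0_eq X1_eq X3_eq X4_eq Rep_qa_inverse)

theorem lemma4p3:
  fixes a b :: int
  shows "(qmul (qmul (mon a 0 0) (E (a, b))) X0 - E (a, b - 1) \<in> Sigma (a + 1, b - 1))
    \<and> (qmul (qmul (mon b 0 0) X3) (E (a, b)) - E (a - 1, b) \<in> Sigma (a - 1, b + 4))
    \<and> (qmul (qmul (mon b 0 0) (E (a, b))) X1 - E (a + 1, b) \<in> Sigma (a + 1, b + 4))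
    \<and> (b > 0 \<longrightarrow> qmul (qmul (mon (- a) 0 0) X4) (E (a, b)) - E (a, b - 1) \<in> Sigma (a - 1, b - 1))
    \<and> (a > 0 \<and> b \<le> 0 \<longrightarrow>
         qmul (qmul (mon (- (a - b)) 0 0) X4) (E (a, b)) - E (a - 1, b - 1) \<in> Sigma (a - 1, b + 3))
    \<and> (a \<le> 0 \<and> b \<le> 0 \<longrightarrow>
         qmul (qmul (mon (- (a - b)) 0 0) X4) (E (a, b)) - E (a - 1, b - 1) \<in> Sigma (a, b))"
proof -
  have ab: "- (a - b) = b - a" by simp
  show ?thesis unfolding transl Abs_X ab
    using W_Sigma_diff[OF item1W] W_Sigma_diff[OF item2W] W_Sigma_diff[OF item3W]
      W_Sigma_diff[OF item4W] W_Sigma_diff[OF item5W] W_Sigma_diff[OF item6W]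
    by blast
qed

end
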